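(* Let $r$, $s$, $c$, $d$ and $a_n$ be any integers with $r\neq0$, and assume $p^2-4q\neq0$ and that $V_d$, $V_{r+d}$, $U_r$ are nonzero. If $n$ is a positive even integer, then \[ \begin{split} &\sum_{a_{n-1}=c}^{a_n}\sum_{a_{n-2}=c}^{a_{n-1}}\cdots\sum_{a_0=c}^{a_1}\left(\frac{V_d}{V_{r+d}}\right)^{a_0}W_{ra_0+s} =\frac{1}{q^{dn}\Delta^n}\left(\frac{V_d}{U_r}\right)^n\left(\frac{V_d}{V_{r+d}}\right)^{a_n}W_{r(n+a_n)+dn+s}\\ &\quad-\left(\frac{V_d}{V_{r+d}}\right)^{c-1}\frac{1}{\Delta^n}\sum_{j=0}^{(n-2)/2}\frac{\Delta^{2j}}{q^{d(n-2j)}}\left(\frac{V_d}{U_r}\right)^{n-2j}W_{(r+d)(n-2j)+r(c-1)+s}\binom{a_n+2j-c}{2j}\\ &\quad-\left(\frac{V_d}{V_{r+d}}\right)^{c-1}\frac{1}{\Delta^{n+2}}\sum_{j=1}^{n/2}\frac{\Delta^{2j}}{q^{d(n-2j+1)}}\left(\frac{V_d}{U_r}\right)^{n-2j+1}\Big(W_{(r+d)(n-2j+1)+r(c-1)+s+1}-qW_{(r+d)(n-2j+1)+r(c-1)+s-1}\Big)\binom{a_n+2j-1-c}{2j-1}, \end{split} \] while if $n$ is a positive odd integer, then \[ \begin{split} &\sum_{a_{n-1}=c}^{a_n}\sum_{a_{n-2}=c}^{a_{n-1}}\cdots\sum_{a_0=c}^{a_1}\left(\frac{V_d}{V_{r+d}}\right)^{a_0}W_{ra_0+s}\\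 &=\frac{1}{q^{dn}\Delta^{n+1}}\left(\frac{V_d}{U_r}\right)^n\left(\frac{V_d}{V_{r+d}}\right)^{a_n}\Big(W_{r(n+a_n)+dn+s+1}-qW_{r(n+a_n)+dn+s-1}\Big)\\ &\quad-\left(\frac{V_d}{V_{r+d}}\right)^{c-1}\frac{1}{\Delta^{n+1}}\sum_{j=0}^{(n-1)/2}\frac{\Delta^{2j}}{q^{d(n-2j)}}\left(\frac{V_d}{U_r}\right)^{n-2j}\Big(W_{(r+d)(n-2j)+r(c-1)+s+1}-qW_{(r+d)(n-2j)+r(c-1)+s-1}\Big)\binom{a_n+2j-c}{2j}\\ &\quad-\left(\frac{V_d}{V_{r+d}}\right)^{c-1}\frac{1}{\Delta^{n+1}}\sum_{j=1}^{(n-1)/2}\frac{\Delta^{2j}}{q^{d(n-2j+1)}}\left(\frac{V_d}{U_r}\right)^{n-2j+1}W_{(r+d)(n-2j+1)+r(c-1)+s}\binom{a_n+2j-1-c}{2j-1}. \end{split} \]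
   Context: Let $a,b,p,q$ be complex numbers with $p\neq0$, $q\neq0$. The Horadam sequence $W_j=W_j(a,b;p,q)$ is defined by $W_0=a$, $W_1=b$, $W_j=pW_{j-1}-qW_{j-2}$ for $j\ge2$, and extended to negative indices by $W_{-m}=(pW_{-m+1}-W_{-m+2})/q$, so the recurrence holds for all integers. $U_j=W_j(0,1;p,q)$ and $V_j=W_j(2,p;p,q)$ are the Lucas sequences of the first and second kinds. $\Delta=\sqrt{p^2-4q}$ (only even powers of $\Delta$ occur, so the choice of square root is immaterial). For integers $c,m$ and a function $f$ on the integers, $\sum_{k=c}^m f(k)$ denotes the usual sum if $m\ge c$, equals $0$ if $m=c-1$, and equals $-\sum_{k=m+1}^{c-1}f(k)$ if $m\le c-2$. The nested sum $\sum_{a_{n-1}=c}^{a_n}\cdots\sum_{a_0=c}^{a_1}g(a_0)$ is the iterated sum with $n$ summation signs: innermost over $a_0$ from $c$ to $a_1$, then $a_1$ from $c$ to $a_2$, ..., outermost $a_{n-1}$ from $c$ to $a_n$. For an integer $j\ge0$ and any number $y$, $\binom{y}{j}=y(y-1)\cdots(y-j+1)/j!$. An empty sum (e.g. $\sum_{j=1}^{0}$) is $0$. *)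

theory Defs
  imports Complex_Main
begin

fun Wpos :: "complex \<Rightarrow> complex \<Rightarrow> complex \<Rightarrow> complex \<Rightarrow> nat \<Rightarrow> complex" where
  "Wpos a b p q 0 = a"
| "Wpos a b p q (Suc 0) = b"
| "Wpos a b p q (Suc (Suc n)) = p * Wpos a b p q (Suc n) - q * Wpos a b p q n"

fun Wneg :: "complex \<Rightarrow> complex \<Rightarrow> complex \<Rightarrow> complex \<Rightarrow> nat \<Rightarrow> complex" where
  "Wneg a b p q 0 = a"
| "Wneg a b p q (Suc 0) = (p * a - b) / q"
| "Wneg a b p q (Suc (Suc n)) = (p * Wneg a b p q (Suc n) - Wneg a b p q n) / q"

definition W :: "complex \<Rightarrow> complex \<Rightarrow> complex \<Rightarrow> complex \<Rightarrow> int \<Rightarrow> complex" where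
  "W a b p q j = (if 0 \<le> j then Wpos a b p q (nat j) else Wneg a b p q (nat (- j)))"

definition U :: "complex \<Rightarrow> complex \<Rightarrow> int \<Rightarrow> complex" where
  "U p q = W 0 1 p q"

definition V :: "complex \<Rightarrow> complex \<Rightarrow> int \<Rightarrow> complex" where
  "V p q = W 2 p p q"

definition Delta :: "complex \<Rightarrow> complex \<Rightarrow> complex" where
  "Delta p q = csqrt (p\<^sup>2 - 4 * q)"

definition gsum :: "int \<Rightarrow> int \<Rightarrow> (int \<Rightarrow> complex) \<Rightarrow> complex" where
  "gsum c m f = (if c \<le> m then (\<Sum>k\<in>{c..m}. f k) else - (\<Sum>k\<in>{m+1..c-1}. f k))"

text \<open>nested_sum c n g x = sum_{a_{n-1}=c}^{x} ... sum_{a_0=c}^{a_1} g a_0 (n summation signs).\<close>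
fun nested_sum :: "int \<Rightarrow> nat \<Rightarrow> (int \<Rightarrow> complex) \<Rightarrow> int \<Rightarrow> complex" where
  "nested_sum c 0 g x = g x"
| "nested_sum c (Suc n) g x = gsum c x (nested_sum c n g)"

end

theory Submission
  imports Defs
begin


lemma gsum_step: "gsum c m f = gsum c (m - 1) f + f m"
proof -
  consider "c \<le> m - 1" | "c = m" | "m < c" by linarith
  then show ?thesis
  proof cases
    case 1
    then have "{c..m} = insert m {c..m-1}" by auto
    then show ?thesis using 1 by (simp add: gsum_def)
  next
    case 2 then show ?thesis by (simp add: gsum_def)
  next
    case 3
    then have "{m..c-1} = insert m {m+1..c-1}" by auto
    then show ?thesis using 3 by (simp add: gsum_def)
  qed
qed

lemma gsum_unique:
  assumes "H (c-1) = 0" "\<And>k. H k = H (k-1) + f k"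
  shows "gsum c m f = H m"
proof -
  have "gsum c m f - H m = 0"
  proof (induction m rule: int_induct[where k="c-1"])
    case base then show ?case using assms(1) by (simp add: gsum_def)
  next
    case (step1 i)
    then show ?case using gsum_step[of c "i+1" f] assms(2)[of "i+1"] by simp
  next
    case (step2 i)
    then show ?case using gsum_step[of c i f] assms(2)[of i] by (simp add: algebra_simps)
  qed
  then show ?thesis by simp
qed

lemma gsum_lin: "gsum c m (\<lambda>k. u * f k + v * g k) = u * gsum c m f + v * gsum c m g"
  by (simp add: gsum_def sum.distrib sum_distrib_left algebra_simps)

lemma nested_lin: "nested_sum c n (\<lambda>k. u * f k + v * g k) m = u * nested_sum c n f m + v * nested_sum c n g m"
proof (induction n arbitrary: m)
  case 0 then show ?case by simp
next
  case (Suc n)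
  have "nested_sum c n (\<lambda>k. u * f k + v * g k) = (\<lambda>m. u * nested_sum c n f m + v * nested_sum c n g m)"
    using Suc by auto
  then show ?case by (simp add: gsum_lin)
qed

lemma gch_neg1: "(of_int (int i - 1) gchoose i :: complex) = (if i = 0 then 1 else 0)"
proof (cases i)
  case 0 then show ?thesis by simp
next
  case (Suc j)
  then have "(of_int (int i - 1) :: complex) = of_nat j" by simp
  then show ?thesis using Suc by (simp add: binomial_gbinomial[symmetric])
qed

lemma gch_diff: "(of_int x gchoose Suc i :: complex) = (of_int (x - 1) gchoose Suc i) + (of_int (x-1) gchoose i)"
  using gbinomial_Suc_Suc[of "of_int (x-1) :: complex" i] by simp

lemma geom_nested:
  fixes t :: complex
  assumes t0: "t \<noteq> 0" and t1: "t \<noteq> 1"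
  defines "\<tau> \<equiv> t / (t - 1)"
  shows "nested_sum c (Suc n) (\<lambda>k. t powi k) m =
     \<tau> ^ Suc n * t powi m - t powi (c - 1) * (\<Sum>i\<le>n. \<tau> ^ (Suc n - i) * (of_int (m - c + int i) gchoose i))"
proof (induction n arbitrary: m)
  case 0
  have "gsum c m (\<lambda>k. t powi k) = \<tau> * t powi m - t powi (c - 1) * \<tau>"
  proof (rule gsum_unique)
    fix k
    have "t powi k = t powi (k - 1) * t" using t0 by (simp add: power_int_minus_mult)
    have tau: "\<tau> * (t - 1) = t" using t1 unfolding \<tau>_def by simp
    have "\<tau> * t powi k - \<tau> * t powi (k-1) = \<tau> * (t - 1) * t powi (k-1)"
      by (simp add: \<open>t powi k = _\<close> algebra_simps)
    also have "\<dots> = t powi k" using tau \<open>t powi k = _\<close> by (simp add: mult.commute)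
    finally show "\<tau> * t powi k - t powi (c - 1) * \<tau> = \<tau> * t powi (k - 1) - t powi (c - 1) * \<tau> + t powi k"
      by (simp add: algebra_simps)
  qed simp
  moreover have "nested_sum c 0 (\<lambda>k. t powi k) = (\<lambda>k. t powi k)" by auto
  ultimately show ?case by simp
next
  case (Suc n)
  let ?H = "\<lambda>m. \<tau> ^ Suc n * t powi m - t powi (c - 1) * (\<Sum>i\<le>n. \<tau> ^ (Suc n - i) * (of_int (m - c + int i) gchoose i))"
  let ?G = "\<lambda>m. \<tau> ^ Suc (Suc n) * t powi m - t powi (c - 1) * (\<Sum>i\<le>Suc n. \<tau> ^ (Suc (Suc n) - i) * (of_int (m - c + int i) gchoose i))"
  have eq: "nested_sum c (Suc n) (\<lambda>k. t powi k) = ?H" using Suc by auto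
  have "gsum c m ?H = ?G m"
  proof (rule gsum_unique)
    have "(\<Sum>i\<le>Suc n. \<tau> ^ (Suc (Suc n) - i) * (of_int (c - 1 - c + int i) gchoose i)) = \<tau> ^ Suc (Suc n)"
      by (subst sum.atMost_Suc_shift) (simp add: gch_neg1[of "Suc _", simplified])
    then show "?G (c - 1) = 0" by simp
  next
    fix k
    have tk: "t powi k = t powi (k - 1) * t" using t0 by (simp add: power_int_minus_mult)
    have s1: "(\<Sum>i\<le>Suc n. \<tau> ^ (Suc (Suc n) - i) * (of_int (k - c + int i) gchoose i))
       = \<tau> ^ Suc (Suc n) + (\<Sum>i\<le>n. \<tau> ^ (Suc n - i) * (of_int (k - c + int (Suc i)) gchoose Suc i))"
      by (subst sum.atMost_Suc_shift) simp
    have s2: "(\<Sum>i\<le>Suc n. \<tau> ^ (Suc (Suc n) - i) * (of_int (k - 1 - c + int i) gchoose i))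
       = \<tau> ^ Suc (Suc n) + (\<Sum>i\<le>n. \<tau> ^ (Suc n - i) * (of_int (k - 1 - c + int (Suc i)) gchoose Suc i))"
      by (subst sum.atMost_Suc_shift) simp
    have s3: "(\<Sum>i\<le>n. \<tau> ^ (Suc n - i) * (of_int (k - c + int (Suc i)) gchoose Suc i))
      = (\<Sum>i\<le>n. \<tau> ^ (Suc n - i) * (of_int (k - 1 - c + int (Suc i)) gchoose Suc i))
       + (\<Sum>i\<le>n. \<tau> ^ (Suc n - i) * (of_int (k - c + int i) gchoose i))"
    proof -
      have "\<And>i. (of_int (k - c + int (Suc i)) gchoose Suc i :: complex) = (of_int (k - 1 - c + int (Suc i)) gchoose Suc i) + (of_int (k - c + int i) gchoose i)"
      proof -
        fix i
        have e1: "k - 1 - c + int (Suc i) = k - c + int (Suc i) - 1" by simp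
        have e2: "k - c + int i = k - c + int (Suc i) - 1" by simp
        show "(of_int (k - c + int (Suc i)) gchoose Suc i :: complex) = (of_int (k - 1 - c + int (Suc i)) gchoose Suc i) + (of_int (k - c + int i) gchoose i)"
          unfolding e1 e2 by (rule gch_diff)
      qed
      then show ?thesis by (simp add: sum.distrib[symmetric] algebra_simps)
    qed
    have "\<tau> ^ Suc (Suc n) * t powi k = \<tau> ^ Suc (Suc n) * t powi (k-1) + \<tau> ^ Suc n * t powi k"
    proof -
      have tau: "\<tau> * (t - 1) = t" using t1 unfolding \<tau>_def by simp
      have "\<tau> ^ Suc (Suc n) * t powi k - \<tau> ^ Suc (Suc n) * t powi (k-1) = \<tau> ^ Suc n * (\<tau> * (t - 1)) * t powi (k-1)"
        by (simp add: tk algebra_simps)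
      also have "\<dots> = \<tau> ^ Suc n * t powi k" using tau tk by (simp add: mult.commute)
      finally show ?thesis by (simp add: algebra_simps)
    qed
    then show "?G k = ?G (k - 1) + ?H k"
      unfolding s1 s2 s3 by (simp add: algebra_simps)
  qed
  then show ?case using eq by simp
qed



lemma three_cases: obtains "n = 0" | "n = Suc 0" | m where "n = Suc (Suc m)"
  by (metis not0_implies_Suc)

lemma Wpos_binet0:
  fixes al be :: complex
  assumes "al * be = q" "al + be = p"
  shows "(al - be) * Wpos a b p q n = (b - a*be) * al ^ n + (a*al - b) * be ^ n"
proof (induction n rule: less_induct)
  case (less n)
  show ?case
  proof (cases n rule: three_cases)
    case 1 then show ?thesis by (simp add: algebra_simps)
  next
    case 2 then show ?thesis by (simp add: algebra_simps)
  next
    case (3 m)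
    have "(al - be) * Wpos a b p q n = p * ((al - be) * Wpos a b p q (Suc m)) - q * ((al - be) * Wpos a b p q m)"
      using 3 by (simp add: algebra_simps)
    also have "\<dots> = (b - a*be) * al ^ n + (a*al - b) * be ^ n"
    proof -
      have h1: "(al - be) * Wpos a b p q m = (b - a*be) * al ^ m + (a*al - b) * be ^ m" using less 3 by simp
      have h2: "(al - be) * Wpos a b p q (Suc m) = (b - a*be) * al ^ Suc m + (a*al - b) * be ^ Suc m" using less 3 by simp
      show ?thesis unfolding h1 h2 using 3 assms[symmetric] by (simp add: algebra_simps)
    qed
    finally show ?thesis .
  qed
qed

lemma Wneg_binet0:
  fixes al be :: complex
  assumes "al * be = q" "al + be = p" "q \<noteq> 0"
  shows "(al - be) * Wneg a b p q n = (b - a*be) * inverse al ^ n + (a*al - b) * inverse be ^ n"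
proof (induction n rule: less_induct)
  case (less n)
  have d: "al \<noteq> 0" "be \<noteq> 0" using assms by auto
  show ?case
  proof (cases n rule: three_cases)
    case 1 then show ?thesis by (simp add: algebra_simps)
  next
    case 2 then show ?thesis using d assms(1,2)[symmetric] by (simp add: field_simps)
  next
    case (3 m)
    have "(al - be) * Wneg a b p q n = (p * ((al - be) * Wneg a b p q (Suc m)) - ((al - be) * Wneg a b p q m)) / q"
      using 3 by (simp add: right_diff_distrib times_divide_eq_right algebra_simps)
    also have "\<dots> = (b - a*be) * inverse al ^ n + (a*al - b) * inverse be ^ n"
    proof -
      have h1: "(al - be) * Wneg a b p q m = (b - a*be) * inverse al ^ m + (a*al - b) * inverse be ^ m" using less 3 by simp
      have h2: "(al - be) * Wneg a b p q (Suc m) = (b - a*be) * inverse al ^ Suc m + (a*al - b) * inverse be ^ Suc m" using less 3 by simp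
      show ?thesis unfolding h1 h2 using 3 d assms(1,2)[symmetric] by (simp add: field_simps)
    qed
    finally show ?thesis .
  qed
qed

lemma W_binet:
  fixes al be :: complex
  assumes "al * be = q" "al + be = p" "al \<noteq> be" "q \<noteq> 0"
  shows "W a b p q j = (b - a*be)/(al-be) * al powi j + (a*al - b)/(al-be) * be powi j"
proof -
  have d: "al - be \<noteq> 0" using assms by simp
  have "(al - be) * W a b p q j = (b - a*be) * al powi j + (a*al - b) * be powi j"
    using Wpos_binet0[OF assms(1-2)] Wneg_binet0[OF assms(1,2,4)] by (simp add: W_def power_int_def)
  then have "W a b p q j = ((b - a*be) * al powi j + (a*al - b) * be powi j) / (al - be)"
    using d by (simp add: nonzero_eq_divide_eq mult.commute)
  then show ?thesis by (simp add: add_divide_distrib)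
qed



lemma pow_t:
  fixes z x :: complex assumes "z \<noteq> 0"
  shows "(x * z powi r) powi k = x powi k * z powi (r * k)"
  by (simp add: power_int_mult_distrib power_int_mult)

lemma main_form:
  fixes al be a b p q :: complex and r s c d m :: int and n :: nat
  assumes ab: "al * be = q" "al + be = p" "al \<noteq> be" "q \<noteq> 0"
    and nz: "V p q d \<noteq> 0" "V p q (r + d) \<noteq> 0" "U p q r \<noteq> 0"
  defines "A \<equiv> (b - a*be)/(al-be)" and "B \<equiv> (a*al - b)/(al-be)"
    and "x \<equiv> V p q d / V p q (r + d)"
    and "K \<equiv> V p q d / (q powi d * (al - be) * U p q r)"
  shows "nested_sum c (Suc n) (\<lambda>k. x powi k * W a b p q (r*k+s)) m =
     K ^ Suc n * x powi m * (A * al powi ((r+d)*int (Suc n) + r*m + s) + (-1)^Suc n * B * be powi ((r+d)*int (Suc n) + r*m + s))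
   - x powi (c - 1) * (\<Sum>i\<le>n. K ^ (Suc n - i) * (of_int (m - c + int i) gchoose i) *
        (A * al powi ((r+d)*int (Suc n - i) + r*(c-1) + s) + (-1)^(Suc n - i) * B * be powi ((r+d)*int (Suc n - i) + r*(c-1) + s)))"
proof -
  have al0: "al \<noteq> 0" and be0: "be \<noteq> 0" using ab by auto
  have D0: "al - be \<noteq> 0" using ab by simp
  have c1: "(p - 2*be)/(al-be) = 1" "(2*al - p)/(al-be) = 1"
    using D0 ab(2)[symmetric] by (simp_all add: algebra_simps)
  have Vf: "\<And>k. V p q k = al powi k + be powi k"
    unfolding V_def using W_binet[OF ab, of 2 p] c1 by simp
  have Uf: "\<And>k. U p q k = (al powi k - be powi k) / (al - be)"
    unfolding U_def using W_binet[OF ab, of 0 1] D0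
    by (simp add: diff_divide_distrib)
  have Wf: "\<And>j. W a b p q j = A * al powi j + B * be powi j"
    unfolding A_def B_def using W_binet[OF ab] by simp
  define ar where "ar = al powi r"
  define ad where "ad = al powi d"
  define br where "br = be powi r"
  define bd where "bd = be powi d"
  have nz0: "ar \<noteq> 0" "ad \<noteq> 0" "br \<noteq> 0" "bd \<noteq> 0" using al0 be0 unfolding ar_def ad_def br_def bd_def by auto
  have Vd: "V p q d = ad + bd" unfolding Vf ad_def bd_def ..
  have Vrd: "V p q (r+d) = ar * ad + br * bd" unfolding Vf ar_def ad_def br_def bd_def
    using al0 be0 by (simp add: power_int_add)
  have Ur: "U p q r = (ar - br) / (al - be)" unfolding Uf ar_def br_def ..
  have qd: "q powi d = ad * bd" unfolding ad_def bd_def ab(1)[symmetric] by (simp add: power_int_mult_distrib)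
  have nz1: "ad + bd \<noteq> 0" "ar * ad + br * bd \<noteq> 0" "ar - br \<noteq> 0" using nz D0 unfolding Vd Vrd Ur by auto
  define t1 where "t1 = x * ar"
  define t2 where "t2 = x * br"
  have x_eq: "x = (ad + bd) / (ar * ad + br * bd)" unfolding x_def Vd Vrd ..
  have K_eq: "K = (ad + bd) / (ad * bd * (ar - br))" unfolding K_def Vd qd Ur using D0 by simp
  have t1m1: "t1 - 1 = bd * (ar - br) / (ar * ad + br * bd)"
    unfolding t1_def x_eq using nz1 by (simp add: field_simps)
  have t2m1: "t2 - 1 = ad * (br - ar) / (ar * ad + br * bd)"
    unfolding t2_def x_eq using nz1 by (simp add: field_simps)
  have t10: "t1 \<noteq> 0" "t1 \<noteq> 1" using nz0 nz1 t1m1 unfolding t1_def x_eq by auto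
  have t20: "t2 \<noteq> 0" "t2 \<noteq> 1" using nz0 nz1 t2m1 unfolding t2_def x_eq by auto
  have t1e: "t1 = (ad + bd) * ar / (ar * ad + br * bd)" unfolding t1_def x_eq by simp
  have t2e: "t2 = (ad + bd) * br / (ar * ad + br * bd)" unfolding t2_def x_eq by simp
  have dd: "\<And>X Y Vv::complex. Vv \<noteq> 0 \<Longrightarrow> (X / Vv) / (Y / Vv) = X / Y" by simp
  have tau1: "t1 / (t1 - 1) = K * (ar * ad)"
    unfolding t1m1 unfolding t1e dd[OF nz1(2)] K_eq using nz0 nz1 by (simp add: field_simps)
  have "br - ar \<noteq> 0" using nz1 by simp
  then have tau2: "t2 / (t2 - 1) = - K * (br * bd)"
    unfolding t2m1 unfolding t2e dd[OF nz1(2)] K_eq using nz0 nz1 by (simp add: field_simps)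
  have ale: "al powi (r + d) = ar * ad" unfolding ar_def ad_def using al0 by (simp add: power_int_add)
  have bee: "be powi (r + d) = br * bd" unfolding br_def bd_def using be0 by (simp add: power_int_add)
  have F1: "\<And>e k. A * al powi s * ((K*(ar*ad))^e * t1 powi k) = K^e * x powi k * (A * al powi ((r+d)*int e + r*k + s))"
  proof -
    fix e k
    have "t1 powi k = x powi k * al powi (r * k)" unfolding t1_def ar_def by (rule pow_t[OF al0])
    moreover have "(ar*ad)^e = al powi ((r+d) * int e)" unfolding ale[symmetric] by (simp add: power_int_power')
    moreover have "al powi ((r+d)*int e + r*k + s) = al powi ((r+d) * int e) * al powi (r*k) * al powi s"
      using al0 by (simp add: power_int_add)
    ultimately show "A * al powi s * ((K*(ar*ad))^e * t1 powi k) = K^e * x powi k * (A * al powi ((r+d)*int e + r*k + s))"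
      unfolding power_mult_distrib[of K "ar*ad"] by (simp only: mult_ac)
  qed
  have F2: "\<And>e k. B * be powi s * ((- K*(br*bd))^e * t2 powi k) = K^e * x powi k * ((-1)^e * B * be powi ((r+d)*int e + r*k + s))"
  proof -
    fix e k
    have "t2 powi k = x powi k * be powi (r * k)" unfolding t2_def br_def by (rule pow_t[OF be0])
    moreover have "(br*bd)^e = be powi ((r+d) * int e)" unfolding bee[symmetric] by (simp add: power_int_power')
    moreover have "be powi ((r+d)*int e + r*k + s) = be powi ((r+d) * int e) * be powi (r*k) * be powi s"
      using be0 by (simp add: power_int_add)
    moreover have "(- K*(br*bd))^e = (-1)^e * K^e * (br*bd)^e"
      by (simp only: power_mult_distrib[symmetric] mult_minus1)
    ultimately show "B * be powi s * ((- K*(br*bd))^e * t2 powi k) = K^e * x powi k * ((-1)^e * B * be powi ((r+d)*int e + r*k + s))"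
      by (simp only: mult_ac)
  qed
  have g_eq: "(\<lambda>k. x powi k * W a b p q (r*k+s)) = (\<lambda>k. (A * al powi s) * t1 powi k + (B * be powi s) * t2 powi k)"
  proof
    fix k
    have "t1 powi k = x powi k * al powi (r * k)" unfolding t1_def ar_def by (rule pow_t[OF al0])
    moreover have "t2 powi k = x powi k * be powi (r * k)" unfolding t2_def br_def by (rule pow_t[OF be0])
    moreover have "al powi (r*k+s) = al powi (r*k) * al powi s" using al0 by (simp add: power_int_add)
    moreover have "be powi (r*k+s) = be powi (r*k) * be powi s" using be0 by (simp add: power_int_add)
    ultimately show "x powi k * W a b p q (r*k+s) = (A * al powi s) * t1 powi k + (B * be powi s) * t2 powi k"
      unfolding Wf by (simp add: algebra_simps)
  qed
  let ?b = "\<lambda>i. (of_int (m - c + int i) gchoose i :: complex)"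
  have "nested_sum c (Suc n) (\<lambda>k. x powi k * W a b p q (r*k+s)) m
     = A * al powi s * ((K*(ar*ad)) ^ Suc n * t1 powi m - t1 powi (c - 1) * (\<Sum>i\<le>n. (K*(ar*ad)) ^ (Suc n - i) * ?b i))
     + B * be powi s * ((-K*(br*bd)) ^ Suc n * t2 powi m - t2 powi (c - 1) * (\<Sum>i\<le>n. (-K*(br*bd)) ^ (Suc n - i) * ?b i))"
    unfolding g_eq nested_lin geom_nested[OF t10] geom_nested[OF t20] tau1 tau2 ..
  also have "\<dots> = (A * al powi s * ((K*(ar*ad)) ^ Suc n * t1 powi m) + B * be powi s * ((-K*(br*bd)) ^ Suc n * t2 powi m))
     - (\<Sum>i\<le>n. ?b i * (A * al powi s * ((K*(ar*ad)) ^ (Suc n - i) * t1 powi (c - 1)) + B * be powi s * ((-K*(br*bd)) ^ (Suc n - i) * t2 powi (c - 1))))"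
  proof -
    have "(\<Sum>i\<le>n. ?b i * (A * al powi s * ((K*(ar*ad)) ^ (Suc n - i) * t1 powi (c - 1)) + B * be powi s * ((-K*(br*bd)) ^ (Suc n - i) * t2 powi (c - 1))))
      = A * al powi s * (t1 powi (c - 1) * (\<Sum>i\<le>n. (K*(ar*ad)) ^ (Suc n - i) * ?b i)) + B * be powi s * (t2 powi (c - 1) * (\<Sum>i\<le>n. (-K*(br*bd)) ^ (Suc n - i) * ?b i))"
      by (simp add: distrib_left sum.distrib sum_distrib_left mult_ac)
    then show ?thesis by (simp add: right_diff_distrib)
  qed
  also have "\<dots> = K ^ Suc n * x powi m * (A * al powi ((r+d)*int (Suc n) + r*m + s) + (-1)^Suc n * B * be powi ((r+d)*int (Suc n) + r*m + s))
   - (\<Sum>i\<le>n. ?b i * (K ^ (Suc n - i) * x powi (c - 1) * (A * al powi ((r+d)*int (Suc n - i) + r*(c-1) + s)) + K ^ (Suc n - i) * x powi (c - 1) * ((-1)^(Suc n - i) * B * be powi ((r+d)*int (Suc n - i) + r*(c-1) + s))))"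
    unfolding F1 F2 by (simp only: distrib_left)
  also have "\<dots> = K ^ Suc n * x powi m * (A * al powi ((r+d)*int (Suc n) + r*m + s) + (-1)^Suc n * B * be powi ((r+d)*int (Suc n) + r*m + s))
   - x powi (c - 1) * (\<Sum>i\<le>n. K ^ (Suc n - i) * (of_int (m - c + int i) gchoose i) *
        (A * al powi ((r+d)*int (Suc n - i) + r*(c-1) + s) + (-1)^(Suc n - i) * B * be powi ((r+d)*int (Suc n - i) + r*(c-1) + s)))"
    unfolding sum_distrib_left
    by (intro arg_cong2[where f="(-)"] refl sum.cong) (simp_all add: algebra_simps)
  finally show ?thesis .
qed



lemma split_parity:
  fixes f :: "nat \<Rightarrow> complex"
  assumes "n > 0"
  shows "(\<Sum>i\<le>n - 1. f i) = (\<Sum>j=0..(n - 1) div 2. f (2*j)) + (\<Sum>j=1..n div 2. f (2*j - 1))"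
  using assms
proof (induction n rule: nat_induct_non_zero)
  case 1 then show ?case by simp
next
  case (Suc n)
  have L: "(\<Sum>i\<le>Suc n - 1. f i) = (\<Sum>i\<le>n - 1. f i) + f n"
    using Suc by (cases n) (auto simp: atMost_Suc)
  show ?case
  proof (cases "even n")
    case True
    then obtain k where k: "n = 2*k" by auto
    with Suc have k0: "k > 0" by simp
    have "(Suc n - 1) div 2 = k" "Suc n div 2 = k" "(n-1) div 2 = k - 1" "n div 2 = k" using k k0 by auto
    moreover have "{0..k} = insert k {0..k-1}" using k0 by auto
    ultimately show ?thesis unfolding L Suc.IH using k k0 by simp
  next
    case False
    then obtain k where k: "n = 2*k+1" by (metis oddE)
    have "(Suc n - 1) div 2 = k" "Suc n div 2 = Suc k" "(n-1) div 2 = k" "n div 2 = k" using k by auto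
    moreover have "2 * Suc k - 1 = n" using k by simp
    ultimately show ?thesis unfolding L Suc.IH by (simp add: add.assoc)
  qed
qed

lemma alg1:
  fixes D Q R Y g :: complex
  assumes "D \<noteq> 0" "Q \<noteq> 0"
  shows "(1/D^(e+k)) * (D^k / Q^e * R^e * Y * g) = (R/(Q*D))^e * g * Y"
  using assms by (simp add: power_add field_simps power_mult_distrib power_divide)

lemma alg2:
  fixes D Q R Y g :: complex
  assumes "D \<noteq> 0" "Q \<noteq> 0"
  shows "(1/D^(e+k+1)) * (D^k / Q^e * R^e * Y * g) = (R/(Q*D))^e * g * (Y/D)"
  using assms by (simp add: power_add field_simps power_mult_distrib power_divide)



theorem theorem6:
  fixes a b p q :: complex and r s c d an :: int and n :: nat
  assumes "p \<noteq> 0" and "q \<noteq> 0" and "r \<noteq> 0" and "p\<^sup>2 - 4 * q \<noteq> 0"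
    and "V p q d \<noteq> 0" and "V p q (r + d) \<noteq> 0" and "U p q r \<noteq> 0"
    and "n > 0"
  shows
   "(even n \<longrightarrow>
      nested_sum c n (\<lambda>a0. (V p q d / V p q (r + d)) powi a0 * W a b p q (r * a0 + s)) an
      = 1 / (q powi (d * int n) * Delta p q ^ n) * (V p q d / U p q r) ^ n
          * (V p q d / V p q (r + d)) powi an * W a b p q (r * (int n + an) + d * int n + s)
        - (V p q d / V p q (r + d)) powi (c - 1) * (1 / Delta p q ^ n) *
          (\<Sum>j = 0..(n - 2) div 2. Delta p q ^ (2 * j) / q powi (d * (int n - 2 * int j))
             * (V p q d / U p q r) ^ (n - 2 * j)
             * W a b p q ((r + d) * (int n - 2 * int j) + r * (c - 1) + s)
             * (of_int (an + 2 * int j - c) gchoose (2 * j)))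
        - (V p q d / V p q (r + d)) powi (c - 1) * (1 / Delta p q ^ (n + 2)) *
          (\<Sum>j = 1..n div 2. Delta p q ^ (2 * j) / q powi (d * (int n - 2 * int j + 1))
             * (V p q d / U p q r) ^ (n - 2 * j + 1)
             * (W a b p q ((r + d) * (int n - 2 * int j + 1) + r * (c - 1) + s + 1)
                - q * W a b p q ((r + d) * (int n - 2 * int j + 1) + r * (c - 1) + s - 1))
             * (of_int (an + 2 * int j - 1 - c) gchoose (2 * j - 1))))
    \<and> (odd n \<longrightarrow>
      nested_sum c n (\<lambda>a0. (V p q d / V p q (r + d)) powi a0 * W a b p q (r * a0 + s)) an
      = 1 / (q powi (d * int n) * Delta p q ^ (n + 1)) * (V p q d / U p q r) ^ n
          * (V p q d / V p q (r + d)) powi an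
          * (W a b p q (r * (int n + an) + d * int n + s + 1)
             - q * W a b p q (r * (int n + an) + d * int n + s - 1))
        - (V p q d / V p q (r + d)) powi (c - 1) * (1 / Delta p q ^ (n + 1)) *
          (\<Sum>j = 0..(n - 1) div 2. Delta p q ^ (2 * j) / q powi (d * (int n - 2 * int j))
             * (V p q d / U p q r) ^ (n - 2 * j)
             * (W a b p q ((r + d) * (int n - 2 * int j) + r * (c - 1) + s + 1)
                - q * W a b p q ((r + d) * (int n - 2 * int j) + r * (c - 1) + s - 1))
             * (of_int (an + 2 * int j - c) gchoose (2 * j)))
        - (V p q d / V p q (r + d)) powi (c - 1) * (1 / Delta p q ^ (n + 1)) *
          (\<Sum>j = 1..(n - 1) div 2. Delta p q ^ (2 * j) / q powi (d * (int n - 2 * int j + 1))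
             * (V p q d / U p q r) ^ (n - 2 * j + 1)
             * W a b p q ((r + d) * (int n - 2 * int j + 1) + r * (c - 1) + s)
             * (of_int (an + 2 * int j - 1 - c) gchoose (2 * j - 1))))"
proof -
  define D where "D = Delta p q"
  have D2: "D^2 = p^2 - 4*q" unfolding D_def Delta_def by simp
  have D0: "D \<noteq> 0" using assms(4) D2 by auto
  define al where "al = (p + D)/2"
  define be where "be = (p - D)/2"
  have ab1: "al * be = q"
  proof -
    have "al * be = (p^2 - D^2)/4" unfolding al_def be_def by (simp add: field_simps power2_eq_square)
    then show ?thesis using D2 by simp
  qed
  have ab2: "al + be = p" unfolding al_def be_def by (simp add: field_simps)
  have ab3: "al - be = D" unfolding al_def be_def by (simp add: field_simps)
  have ab4: "al \<noteq> be" using ab3 D0 by auto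
  have al0: "al \<noteq> 0" and be0: "be \<noteq> 0" using ab1 assms(2) by auto
  define A where "A = (b - a*be)/(al-be)"
  define B where "B = (a*al - b)/(al-be)"
  define x where "x = V p q d / V p q (r + d)"
  define K where "K = V p q d / (q powi d * (al - be) * U p q r)"
  define R where "R = V p q d / U p q r"
  define Q where "Q = q powi d"
  have Q0: "Q \<noteq> 0" unfolding Q_def using assms(2) by simp
  have KR: "K = R / (Q * D)" unfolding K_def R_def Q_def ab3 by simp
  have Qp: "\<And>e. q powi (d * int e) = Q ^ e" unfolding Q_def by (simp add: power_int_power')
  have Wf: "\<And>j. W a b p q j = A * al powi j + B * be powi j"
    unfolding A_def B_def using W_binet[OF ab1 ab2 ab4 assms(2)] by simp
  have hat: "\<And>F. W a b p q (F+1) - q * W a b p q (F-1) = D * (A * al powi F - B * be powi F)"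
  proof -
    fix F
    have "al powi (F+1) = al powi F * al" "be powi (F+1) = be powi F * be" using al0 be0 by (simp_all add: power_int_add)
    moreover have "al powi (F-1) = al powi F / al" "be powi (F-1) = be powi F / be" using al0 be0 by (simp_all add: power_int_diff)
    ultimately show "W a b p q (F+1) - q * W a b p q (F-1) = D * (A * al powi F - B * be powi F)"
      unfolding Wf ab3[symmetric] using al0 be0 by (simp add: field_simps ab1[symmetric])
  qed
  define Z where "Z = (\<lambda>e F. A * al powi F + (-1)^e * B * be powi F)"
  have Zev: "\<And>e F. even e \<Longrightarrow> Z e F = W a b p q F" unfolding Z_def Wf by simp
  have Zod: "\<And>e F. odd e \<Longrightarrow> Z e F = (W a b p q (F+1) - q * W a b p q (F-1)) / D"
    unfolding Z_def hat using D0 by simp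
  obtain n' where n': "n = Suc n'" using assms(8) by (cases n) auto
  define f where "f = (\<lambda>i. K ^ (n - i) * (of_int (an - c + int i) gchoose i) * Z (n - i) ((r+d)*int (n - i) + r*(c-1) + s))"
  have MF: "nested_sum c n (\<lambda>a0. x powi a0 * W a b p q (r * a0 + s)) an
     = K ^ n * x powi an * Z n ((r+d)*int n + r*an + s) - x powi (c - 1) * (\<Sum>i\<le>n - 1. f i)"
    using main_form[where n=n' and m=an and c=c and s=s and a=a and b=b, OF ab1 ab2 ab4 assms(2) assms(5-7)]
    unfolding n' f_def Z_def A_def[symmetric] B_def[symmetric] x_def[symmetric] K_def[symmetric]
    by simp
  have SP: "(\<Sum>i\<le>n - 1. f i) = (\<Sum>j=0..(n - 1) div 2. f (2*j)) + (\<Sum>j=1..n div 2. f (2*j - 1))"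
    using split_parity assms(8) by blast
  have KP: "\<And>e. K ^ e = R^e / (Q^e * D^e)" unfolding KR by (simp add: power_divide power_mult_distrib)
  show ?thesis
    unfolding x_def[symmetric] R_def[symmetric] D_def[symmetric]
  proof (intro conjI impI)
    assume ev: "even n"
    have T: "1 / (q powi (d * int n) * D ^ n) * R ^ n * x powi an * W a b p q (r * (int n + an) + d * int n + s)
       = K ^ n * x powi an * Z n ((r+d)*int n + r*an + s)"
    proof -
      have "r * (int n + an) + d * int n + s = (r+d)*int n + r*an + s" by (simp add: algebra_simps)
      then show ?thesis unfolding Qp KP Zev[OF ev] by simp
    qed
    have S1: "(1 / D ^ n) * (\<Sum>j = 0..(n - 2) div 2. D ^ (2 * j) / q powi (d * (int n - 2 * int j)) * R ^ (n - 2 * j)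
             * W a b p q ((r + d) * (int n - 2 * int j) + r * (c - 1) + s)
             * (of_int (an + 2 * int j - c) gchoose (2 * j))) = (\<Sum>j=0..(n - 1) div 2. f (2*j))"
    proof -
      have rng: "(n - 2) div 2 = (n - 1) div 2" 
      proof -
        obtain k where "n = 2*k" using ev by (auto elim: evenE)
        then show ?thesis by presburger
      qed
      show ?thesis unfolding rng sum_distrib_left
      proof (rule sum.cong[OF refl])
        fix j assume j: "j \<in> {0..(n - 1) div 2}"
        have le: "2*j < n" using j assms(8) by auto
        have e1: "int n - 2 * int j = int (n - 2*j)" using le by simp
        have evj: "even (n - 2*j)" using ev le by simp
        have nn: "n = (n - 2*j) + 2*j" using le by simp
        have g: "an + 2 * int j - c = an - c + int (2*j)" by simp
        have "1 / D ^ n * (D ^ (2 * j) / q powi (d * (int n - 2 * int j)) * R ^ (n - 2 * j)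
             * W a b p q ((r + d) * (int n - 2 * int j) + r * (c - 1) + s)
             * (of_int (an + 2 * int j - c) gchoose (2 * j)))
          = 1 / D ^ ((n - 2*j) + 2*j) * (D ^ (2 * j) / Q ^ (n - 2*j) * R ^ (n - 2 * j)
             * W a b p q ((r + d) * int (n - 2*j) + r * (c - 1) + s)
             * (of_int (an - c + int (2*j)) gchoose (2 * j)))"
          unfolding e1 Qp g using nn by simp
        also have "\<dots> = f (2*j)"
          unfolding alg1[OF D0 Q0] f_def KR[symmetric] Zev[OF evj] by simp
        finally show "1 / D ^ n * (D ^ (2 * j) / q powi (d * (int n - 2 * int j)) * R ^ (n - 2 * j)
             * W a b p q ((r + d) * (int n - 2 * int j) + r * (c - 1) + s)
             * (of_int (an + 2 * int j - c) gchoose (2 * j))) = f (2*j)" .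
      qed
    qed
    have S2: "(1 / D ^ (n + 2)) * (\<Sum>j = 1..n div 2. D ^ (2 * j) / q powi (d * (int n - 2 * int j + 1))
             * R ^ (n - 2 * j + 1)
             * (W a b p q ((r + d) * (int n - 2 * int j + 1) + r * (c - 1) + s + 1)
                - q * W a b p q ((r + d) * (int n - 2 * int j + 1) + r * (c - 1) + s - 1))
             * (of_int (an + 2 * int j - 1 - c) gchoose (2 * j - 1))) = (\<Sum>j=1..n div 2. f (2*j - 1))"
      unfolding sum_distrib_left
    proof (rule sum.cong[OF refl])
      fix j assume j: "j \<in> {1..n div 2}"
      have le: "2*j \<le> n" "1 \<le> j" using j by auto
      have e0: "n - (2*j - 1) = n - 2*j + 1" using le by simp
      have e1: "int n - 2 * int j + 1 = int (n - (2*j - 1))" using le by simp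
      have odj: "odd (n - (2*j - 1))" using ev le by simp
      have nn: "n + 2 = (n - (2*j - 1)) + 2*j + 1" using le by simp
      have g: "an + 2 * int j - 1 - c = an - c + int (2*j - 1)" using le by simp
      have "1 / D ^ (n + 2) * (D ^ (2 * j) / q powi (d * (int n - 2 * int j + 1))
             * R ^ (n - 2 * j + 1)
             * (W a b p q ((r + d) * (int n - 2 * int j + 1) + r * (c - 1) + s + 1)
                - q * W a b p q ((r + d) * (int n - 2 * int j + 1) + r * (c - 1) + s - 1))
             * (of_int (an + 2 * int j - 1 - c) gchoose (2 * j - 1)))
        = 1 / D ^ ((n - (2*j - 1)) + 2*j + 1) * (D ^ (2 * j) / Q ^ (n - (2*j - 1))
             * R ^ (n - (2*j - 1))
             * (W a b p q ((r + d) * int (n - (2*j - 1)) + r * (c - 1) + s + 1)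
                - q * W a b p q ((r + d) * int (n - (2*j - 1)) + r * (c - 1) + s - 1))
             * (of_int (an - c + int (2*j - 1)) gchoose (2 * j - 1)))"
        unfolding e1 Qp g e0[symmetric] nn[symmetric] by simp
      also have "\<dots> = f (2*j - 1)"
        unfolding alg2[OF D0 Q0] f_def KR[symmetric] Zod[OF odj] by simp
      finally show "1 / D ^ (n + 2) * (D ^ (2 * j) / q powi (d * (int n - 2 * int j + 1))
             * R ^ (n - 2 * j + 1)
             * (W a b p q ((r + d) * (int n - 2 * int j + 1) + r * (c - 1) + s + 1)
                - q * W a b p q ((r + d) * (int n - 2 * int j + 1) + r * (c - 1) + s - 1))
             * (of_int (an + 2 * int j - 1 - c) gchoose (2 * j - 1))) = f (2*j - 1)" .
    qed
    show "nested_sum c n (\<lambda>a0. x powi a0 * W a b p q (r * a0 + s)) an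
      = 1 / (q powi (d * int n) * D ^ n) * R ^ n
          * x powi an * W a b p q (r * (int n + an) + d * int n + s)
        - x powi (c - 1) * (1 / D ^ n) *
          (\<Sum>j = 0..(n - 2) div 2. D ^ (2 * j) / q powi (d * (int n - 2 * int j))
             * R ^ (n - 2 * j)
             * W a b p q ((r + d) * (int n - 2 * int j) + r * (c - 1) + s)
             * (of_int (an + 2 * int j - c) gchoose (2 * j)))
        - x powi (c - 1) * (1 / D ^ (n + 2)) *
          (\<Sum>j = 1..n div 2. D ^ (2 * j) / q powi (d * (int n - 2 * int j + 1))
             * R ^ (n - 2 * j + 1)
             * (W a b p q ((r + d) * (int n - 2 * int j + 1) + r * (c - 1) + s + 1)
                - q * W a b p q ((r + d) * (int n - 2 * int j + 1) + r * (c - 1) + s - 1))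
             * (of_int (an + 2 * int j - 1 - c) gchoose (2 * j - 1)))"
      unfolding T mult.assoc[of "x powi (c - 1)"] S1 S2 MF SP by (simp add: distrib_left)
  next
    assume od: "odd n"
    have T: "1 / (q powi (d * int n) * D ^ (n + 1)) * R ^ n * x powi an
          * (W a b p q (r * (int n + an) + d * int n + s + 1)
             - q * W a b p q (r * (int n + an) + d * int n + s - 1))
       = K ^ n * x powi an * Z n ((r+d)*int n + r*an + s)"
    proof -
      have "r * (int n + an) + d * int n + s = (r+d)*int n + r*an + s" by (simp add: algebra_simps)
      then show ?thesis unfolding Qp KP Zod[OF od] using D0 by simp
    qed
    have S1: "(1 / D ^ (n + 1)) * (\<Sum>j = 0..(n - 1) div 2. D ^ (2 * j) / q powi (d * (int n - 2 * int j))
             * R ^ (n - 2 * j)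
             * (W a b p q ((r + d) * (int n - 2 * int j) + r * (c - 1) + s + 1)
                - q * W a b p q ((r + d) * (int n - 2 * int j) + r * (c - 1) + s - 1))
             * (of_int (an + 2 * int j - c) gchoose (2 * j))) = (\<Sum>j=0..(n - 1) div 2. f (2*j))"
      unfolding sum_distrib_left
    proof (rule sum.cong[OF refl])
      fix j assume j: "j \<in> {0..(n - 1) div 2}"
      have le: "2*j < n" using j assms(8) by auto
      have e1: "int n - 2 * int j = int (n - 2*j)" using le by simp
      have odj: "odd (n - 2*j)" using od le by simp
      have nn: "n + 1 = (n - 2*j) + 2*j + 1" using le by simp
      have g: "an + 2 * int j - c = an - c + int (2*j)" by simp
      have "1 / D ^ (n + 1) * (D ^ (2 * j) / q powi (d * (int n - 2 * int j))
             * R ^ (n - 2 * j)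
             * (W a b p q ((r + d) * (int n - 2 * int j) + r * (c - 1) + s + 1)
                - q * W a b p q ((r + d) * (int n - 2 * int j) + r * (c - 1) + s - 1))
             * (of_int (an + 2 * int j - c) gchoose (2 * j)))
        = 1 / D ^ ((n - 2*j) + 2*j + 1) * (D ^ (2 * j) / Q ^ (n - 2*j)
             * R ^ (n - 2 * j)
             * (W a b p q ((r + d) * int (n - 2*j) + r * (c - 1) + s + 1)
                - q * W a b p q ((r + d) * int (n - 2*j) + r * (c - 1) + s - 1))
             * (of_int (an - c + int (2*j)) gchoose (2 * j)))"
        unfolding e1 Qp g nn[symmetric] by simp
      also have "\<dots> = f (2*j)"
        unfolding alg2[OF D0 Q0] f_def KR[symmetric] Zod[OF odj] by simp
      finally show "1 / D ^ (n + 1) * (D ^ (2 * j) / q powi (d * (int n - 2 * int j))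
             * R ^ (n - 2 * j)
             * (W a b p q ((r + d) * (int n - 2 * int j) + r * (c - 1) + s + 1)
                - q * W a b p q ((r + d) * (int n - 2 * int j) + r * (c - 1) + s - 1))
             * (of_int (an + 2 * int j - c) gchoose (2 * j))) = f (2*j)" .
    qed
    have S2: "(1 / D ^ (n + 1)) * (\<Sum>j = 1..(n - 1) div 2. D ^ (2 * j) / q powi (d * (int n - 2 * int j + 1))
             * R ^ (n - 2 * j + 1)
             * W a b p q ((r + d) * (int n - 2 * int j + 1) + r * (c - 1) + s)
             * (of_int (an + 2 * int j - 1 - c) gchoose (2 * j - 1))) = (\<Sum>j=1..n div 2. f (2*j - 1))"
    proof -
      have rng: "(n - 1) div 2 = n div 2" using od by (auto elim: oddE)
      show ?thesis unfolding rng sum_distrib_left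
      proof (rule sum.cong[OF refl])
        fix j assume j: "j \<in> {1..n div 2}"
        have le: "2*j \<le> n" "1 \<le> j" using j by auto
        have e0: "n - (2*j - 1) = n - 2*j + 1" using le by simp
        have e1: "int n - 2 * int j + 1 = int (n - (2*j - 1))" using le by simp
        have evj: "even (n - (2*j - 1))" using od le by simp
        have nn: "n + 1 = (n - (2*j - 1)) + 2*j" using le by simp
        have g: "an + 2 * int j - 1 - c = an - c + int (2*j - 1)" using le by simp
        have "1 / D ^ (n + 1) * (D ^ (2 * j) / q powi (d * (int n - 2 * int j + 1))
             * R ^ (n - 2 * j + 1)
             * W a b p q ((r + d) * (int n - 2 * int j + 1) + r * (c - 1) + s)
             * (of_int (an + 2 * int j - 1 - c) gchoose (2 * j - 1)))
          = 1 / D ^ ((n - (2*j - 1)) + 2*j) * (D ^ (2 * j) / Q ^ (n - (2*j - 1))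
             * R ^ (n - (2*j - 1))
             * W a b p q ((r + d) * int (n - (2*j - 1)) + r * (c - 1) + s)
             * (of_int (an - c + int (2*j - 1)) gchoose (2 * j - 1)))"
          unfolding e1 Qp g e0[symmetric] nn[symmetric] by simp
        also have "\<dots> = f (2*j - 1)"
          unfolding alg1[OF D0 Q0] f_def KR[symmetric] Zev[OF evj] by simp
        finally show "1 / D ^ (n + 1) * (D ^ (2 * j) / q powi (d * (int n - 2 * int j + 1))
             * R ^ (n - 2 * j + 1)
             * W a b p q ((r + d) * (int n - 2 * int j + 1) + r * (c - 1) + s)
             * (of_int (an + 2 * int j - 1 - c) gchoose (2 * j - 1))) = f (2*j - 1)" .
      qed
    qed
    show "nested_sum c n (\<lambda>a0. x powi a0 * W a b p q (r * a0 + s)) an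
      = 1 / (q powi (d * int n) * D ^ (n + 1)) * R ^ n
          * x powi an
          * (W a b p q (r * (int n + an) + d * int n + s + 1)
             - q * W a b p q (r * (int n + an) + d * int n + s - 1))
        - x powi (c - 1) * (1 / D ^ (n + 1)) *
          (\<Sum>j = 0..(n - 1) div 2. D ^ (2 * j) / q powi (d * (int n - 2 * int j))
             * R ^ (n - 2 * j)
             * (W a b p q ((r + d) * (int n - 2 * int j) + r * (c - 1) + s + 1)
                - q * W a b p q ((r + d) * (int n - 2 * int j) + r * (c - 1) + s - 1))
             * (of_int (an + 2 * int j - c) gchoose (2 * j)))
        - x powi (c - 1) * (1 / D ^ (n + 1)) *
          (\<Sum>j = 1..(n - 1) div 2. D ^ (2 * j) / q powi (d * (int n - 2 * int j + 1))
             * R ^ (n - 2 * j + 1)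
             * W a b p q ((r + d) * (int n - 2 * int j + 1) + r * (c - 1) + s)
             * (of_int (an + 2 * int j - 1 - c) gchoose (2 * j - 1)))"
      unfolding T mult.assoc[of "x powi (c - 1)"] S1 S2 MF SP by (simp add: distrib_left)
  qed
qed

end
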